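(* Let $0<q<1$ and let $a,b,u,v,z_1,z_2\in\mathbb C$ with $|uz_1|<1$, $|vz_2|<1$, and $az_1q^k\neq1$, $bz_2q^k\ne1$ for all $k\in\mathbb N_0$. Then $$\sum_{m,n=0}^\infty H_{m,n}(z_1,z_2|q)\,\frac{\prod_{i=0}^{m-1}(u-aq^i)\,\prod_{i=0}^{n-1}(v-bq^i)}{(q;q)_m(q;q)_n} =\frac{(az_1,bz_2;q)_\infty}{(uz_1,vz_2;q)_\infty}\sum_{k=0}^\infty\frac{\prod_{i=0}^{k-1}(u-aq^i)(v-bq^i)}{(q,az_1,bz_2;q)_k}(-1)^kq^{\binom k2}.$$ (In basic hypergeometric notation, the left side is $\sum H_{m,n}\frac{u^m(a/u;q)_m v^n(b/v;q)_n}{(q;q)_m(q;q)_n}$ and the right side is $\frac{(az_1,bz_2;q)_\infty}{(uz_1,vz_2;q)_\infty}\,{}_2\phi_2(a/u,b/v;az_1,bz_2;q,uv)$.)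
   Context: $(a;q)_n=\prod_{j=0}^{n-1}(1-aq^j)$, $(a;q)_\infty=\prod_{j\ge0}(1-aq^j)$, $(a_1,\dots,a_r;q)_n=\prod_i(a_i;q)_n$, $\left[{m\atop k}\right]_q=\frac{(q;q)_m}{(q;q)_k(q;q)_{m-k}}$, $m\wedge n=\min\{m,n\}$. The first $q$-$2D$-Hermite polynomials are $$H_{m,n}(z_1,z_2|q)=\sum_{k=0}^{m\wedge n}\left[{m\atop k}\right]_q\left[{n\atop k}\right]_q(-1)^kq^{\binom k2}(q;q)_k\,z_1^{m-k}z_2^{n-k}.$$ *)

theory Defs
  imports "HOL-Analysis.Analysis"
begin

definition qpoch :: "complex \<Rightarrow> complex \<Rightarrow> nat \<Rightarrow> complex" where
  "qpoch a q n = (\<Prod>j<n. 1 - a * q ^ j)"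

definition qpoch_inf :: "complex \<Rightarrow> complex \<Rightarrow> complex" where
  "qpoch_inf a q = (\<Prod>j. 1 - a * q ^ j)"

definition qbinom :: "complex \<Rightarrow> nat \<Rightarrow> nat \<Rightarrow> complex" where
  "qbinom q m k = qpoch q q m / (qpoch q q k * qpoch q q (m - k))"

definition H2D :: "nat \<Rightarrow> nat \<Rightarrow> complex \<Rightarrow> complex \<Rightarrow> complex \<Rightarrow> complex" where
  "H2D m n z1 z2 q = (\<Sum>k\<le>min m n. qbinom q m k * qbinom q n k * (-1) ^ k
      * q ^ (k choose 2) * qpoch q q k * z1 ^ (m - k) * z2 ^ (n - k))"

end

theory Submission imports Defs begin

lemma qpoch_0[simp]: "qpoch a q 0 = 1" by (simp add: qpoch_def)

lemma qpoch_Suc: "qpoch a q (Suc n) = qpoch a q n * (1 - a * q ^ n)"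
  by (simp add: qpoch_def)

lemma qpoch_QQ_norm:
  fixes q :: real assumes "0 < q" "q < 1"
  shows "norm (qpoch (of_real q) (of_real q) n) = (\<Prod>j<n. 1 - q ^ Suc j)"
    and "0 < (\<Prod>j<n. 1 - q ^ Suc j)"
proof -
  have pos: "\<And>j. 0 < 1 - q ^ Suc j" using assms power_Suc_less_one[of q]
    by simp
  have e: "qpoch (of_real q) (of_real q) n = of_real (\<Prod>j<n. 1 - q ^ Suc j)"
    by (simp add: qpoch_def)
  show "norm (qpoch (of_real q) (of_real q) n) = (\<Prod>j<n. 1 - q ^ Suc j)"
    unfolding e norm_of_real using pos by (intro abs_of_pos prod_pos) auto
  show "0 < (\<Prod>j<n. 1 - q ^ Suc j)" using pos by (simp add: prod_pos)
qed

lemma qpoch_QQ_nz: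
  fixes q :: real assumes "0 < q" "q < 1"
  shows "qpoch (of_real q) (of_real q) n \<noteq> 0"
  using qpoch_QQ_norm[OF assms, of n] by (metis less_irrefl norm_zero)

lemma conv_qp:
  fixes q :: real and c :: complex assumes "0 < q" "q < 1"
  shows "convergent_prod (\<lambda>j. 1 - c * of_real q ^ j)"
proof (rule abs_convergent_prod_imp_convergent_prod, rule summable_imp_abs_convergent_prod)
  have "summable (\<lambda>j. norm c * q ^ j)" using assms by (intro summable_mult summable_geometric) auto
  then show "summable (\<lambda>j. norm (1 - c * complex_of_real q ^ j - 1))"
    using assms by (simp add: norm_mult norm_power)
qed

lemma qpoch_inf_lim:
  fixes q :: real and c :: complex assumes "0 < q" "q < 1"
  shows "(\<lambda>n. qpoch c (of_real q) n) \<longlonglongrightarrow> qpoch_inf c (of_real q)"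
proof -
  have "(\<lambda>n. \<Prod>i\<le>n. 1 - c * of_real q ^ i) \<longlonglongrightarrow> qpoch_inf c (of_real q)"
    unfolding qpoch_inf_def by (rule convergent_prod_LIMSEQ[OF conv_qp[OF assms]])
  then have "(\<lambda>n. qpoch c (of_real q) (Suc n)) \<longlonglongrightarrow> qpoch_inf c (of_real q)"
    by (simp add: qpoch_def lessThan_Suc_atMost)
  then show ?thesis by (rule LIMSEQ_imp_Suc)
qed

lemma qpoch_inf_nz:
  fixes q :: real and c :: complex assumes "0 < q" "q < 1" "\<And>k. c * of_real q ^ k \<noteq> 1"
  shows "qpoch_inf c (of_real q) \<noteq> 0"
  unfolding qpoch_inf_def using assms(3)
  by (intro prodinf_nonzero conv_qp assms(1,2)) auto

lemma qpoch_inf_split: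
  fixes q :: real and c :: complex assumes "0 < q" "q < 1"
  shows "qpoch_inf c (of_real q) = qpoch_inf (c * of_real q ^ k) (of_real q) * qpoch c (of_real q) k"
proof -
  have L1: "(\<lambda>n. qpoch c (of_real q) (n + k)) \<longlonglongrightarrow> qpoch_inf c (of_real q)"
    using qpoch_inf_lim[OF assms, of c] by (rule LIMSEQ_ignore_initial_segment)
  have eq: "qpoch c (of_real q) (n + k) = qpoch (c * of_real q ^ k) (of_real q) n * qpoch c (of_real q) k" for n
    by (induction n) (auto simp: qpoch_Suc power_add algebra_simps)
  have L2: "(\<lambda>n. qpoch c (of_real q) (n + k)) \<longlonglongrightarrow> qpoch_inf (c * of_real q ^ k) (of_real q) * qpoch c (of_real q) k"
    unfolding eq by (intro tendsto_mult qpoch_inf_lim assms tendsto_const)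
  show ?thesis using LIMSEQ_unique[OF L1 L2] .
qed


definition Astar :: "complex \<Rightarrow> complex \<Rightarrow> complex \<Rightarrow> real \<Rightarrow> nat \<Rightarrow> real" where
  "Astar u c z q r = (\<Prod>i<r. norm u + norm c * q ^ i) * norm z ^ r / (\<Prod>j<r. 1 - q ^ Suc j)"

lemma Astar_Suc: "Astar u c z q (Suc r) = Astar u c z q r * ((norm u + norm c * q ^ r) * norm z / (1 - q ^ Suc r))"
  by (simp add: Astar_def field_simps)

lemma Astar_nonneg: assumes "0 < q" "q < 1" shows "0 \<le> Astar u c z q r"
  unfolding Astar_def using qpoch_QQ_norm(2)[OF assms, of r] assms
  by (intro divide_nonneg_pos mult_nonneg_nonneg prod_nonneg) auto

lemma Astar_summable:
  assumes "0 < q" "q < 1" "norm u * norm z < 1"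
  shows "summable (Astar u c z q)"
proof -
  define \<rho> where "\<rho> = (1 + norm u * norm z) / 2"
  have qr: "(\<lambda>r. q ^ r) \<longlonglongrightarrow> 0" using assms by (intro LIMSEQ_power_zero) auto
  have "(\<lambda>r. (norm u + norm c * q ^ r) * norm z / (1 - q * q ^ r))
        \<longlonglongrightarrow> (norm u + norm c * 0) * norm z / (1 - q * 0)"
    by (intro tendsto_intros qr) (use assms in auto)
  then have lim: "(\<lambda>r. (norm u + norm c * q ^ r) * norm z / (1 - q ^ Suc r)) \<longlonglongrightarrow> norm u * norm z"
    by simp
  have "norm u * norm z < \<rho>" using assms by (simp add: \<rho>_def)
  from order_tendstoD(2)[OF lim this] obtain N where
    N: "\<And>r. r \<ge> N \<Longrightarrow> (norm u + norm c * q ^ r) * norm z / (1 - q ^ Suc r) < \<rho>"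
    by (auto simp: eventually_sequentially)
  show ?thesis
  proof (rule summable_ratio_test[of \<rho> N])
    show "\<rho> < 1" using assms by (simp add: \<rho>_def)
    fix r assume "N \<le> r"
    have "norm (Astar u c z q (Suc r)) = Astar u c z q (Suc r)"
      using Astar_nonneg[OF assms(1,2), of u c z "Suc r"] by simp
    also have "\<dots> = Astar u c z q r * ((norm u + norm c * q ^ r) * norm z / (1 - q ^ Suc r))"
      by (rule Astar_Suc)
    also have "\<dots> \<le> Astar u c z q r * \<rho>"
      using N[OF \<open>N \<le> r\<close>] Astar_nonneg[OF assms(1,2), of u c z r]
      by (intro mult_left_mono) auto
    finally show "norm (Astar u c z q (Suc r)) \<le> \<rho> * norm (Astar u c z q r)"
      using Astar_nonneg[OF assms(1,2), of u c z r] by (simp add: mult.commute)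
  qed
qed

lemma norm_prod_le_Astar:
  fixes q :: real and u c :: complex
  assumes "0 < q" "q < 1" "norm c' \<le> norm c"
  shows "norm (\<Prod>i<r. u - c' * of_real q ^ i) \<le> (\<Prod>i<r. norm u + norm c * q ^ i)"
proof -
  have "norm (\<Prod>i<r. u - c' * of_real q ^ i) \<le> (\<Prod>i<r. norm (u - c' * of_real q ^ i))"
    by (rule norm_prod_le)
  also have "\<dots> \<le> (\<Prod>i<r. norm u + norm c * q ^ i)"
  proof (rule prod_mono, safe)
    fix i
    have "norm (u - c' * of_real q ^ i) \<le> norm u + norm (c' * of_real q ^ i)" by (rule norm_triangle_ineq4)
    also have "norm (c' * of_real q ^ i) = norm c' * q ^ i" using assms by (simp add: norm_mult norm_power)
    also have "norm c' * q ^ i \<le> norm c * q ^ i" using assms by (intro mult_right_mono) auto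
    finally show "norm (u - c' * of_real q ^ i) \<le> norm u + norm c * q ^ i" by simp
  qed auto
  finally show ?thesis .
qed

lemma norm_term_le_Astar:
  fixes q :: real and u c c' w z :: complex
  assumes "0 < q" "q < 1" "norm c' \<le> norm c" "norm w \<le> norm z"
  shows "norm ((\<Prod>i<r. u - c' * of_real q ^ i) / qpoch (of_real q) (of_real q) r * w ^ r) \<le> Astar u c z q r"
proof -
  have "norm ((\<Prod>i<r. u - c' * of_real q ^ i) / qpoch (of_real q) (of_real q) r * w ^ r)
     = norm (\<Prod>i<r. u - c' * of_real q ^ i) * norm w ^ r / (\<Prod>j<r. 1 - q ^ Suc j)"
    by (simp add: norm_mult norm_divide norm_power qpoch_QQ_norm[OF assms(1,2)])
  also have "\<dots> \<le> (\<Prod>i<r. norm u + norm c * q ^ i) * norm z ^ r / (\<Prod>j<r. 1 - q ^ Suc j)"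
    using qpoch_QQ_norm(2)[OF assms(1,2), of r] assms power_Suc_less_one[of q]
    by (intro divide_right_mono mult_mono norm_prod_le_Astar power_mono prod_nonneg) (auto intro: less_imp_le)
  finally show ?thesis by (simp add: Astar_def)
qed


lemma qbin:
  fixes q :: real and u c z :: complex
  assumes q: "0 < q" "q < 1" and uz: "norm (u * z) < 1"
  shows "(\<lambda>r. (\<Prod>i<r. u - c * of_real q ^ i) / qpoch (of_real q) (of_real q) r * z ^ r)
           sums (qpoch_inf (c * z) (of_real q) / qpoch_inf (u * z) (of_real q))"
proof -
  define Q where "Q = (of_real q :: complex)"
  define \<alpha> where "\<alpha> r = (\<Prod>i<r. u - c * Q ^ i) / qpoch Q Q r" for r
  define g where "g w = (\<Sum>r. \<alpha> r * w ^ r)" for w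
  have normQ: "norm Q = q" using q by (simp add: Q_def)
  have sA: "summable (Astar u c z q)" using Astar_summable[OF q, of u z c] uz by (simp add: norm_mult)
  have bnd: "norm (\<alpha> r * w ^ r) \<le> Astar u c z q r" if "norm w \<le> norm z" for w r
    unfolding \<alpha>_def Q_def by (rule norm_term_le_Astar[OF q order_refl that])
  have sm: "summable (\<lambda>r. \<alpha> r * w ^ r)" if "norm w \<le> norm z" for w
    by (rule summable_comparison_test[OF _ sA]) (use bnd[OF that] in auto)
  have S: "(\<lambda>r. \<alpha> r * w ^ r) sums g w" if "norm w \<le> norm z" for w
    unfolding g_def using sm[OF that] by (rule summable_sums)
  have Qnz: "qpoch Q Q r \<noteq> 0" for r unfolding Q_def by (rule qpoch_QQ_nz[OF q])
  have \<alpha>Suc: "\<alpha> (Suc r) * (1 - Q ^ Suc r) = \<alpha> r * (u - c * Q ^ r)" for r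
  proof -
    have "1 - Q * Q ^ r \<noteq> 0" using Qnz[of "Suc r"] by (simp add: qpoch_Suc)
    then show ?thesis using Qnz[of r] by (simp add: \<alpha>_def qpoch_Suc field_simps)
  qed
  have FE: "g w * (1 - u * w) = g (Q * w) * (1 - c * w)" if w: "norm w \<le> norm z" for w
  proof -
    have w': "norm (Q * w) \<le> norm z"
      using w q by (simp add: norm_mult normQ) (metis mult_left_le_one_le norm_ge_zero order_trans less_imp_le)
    define h where "h r = \<alpha> r * (1 - Q ^ r) * w ^ r" for r
    have "(\<lambda>r. \<alpha> r * w ^ r - \<alpha> r * (Q * w) ^ r) sums (g w - g (Q * w))"
      by (intro sums_diff S w w')
    moreover have "(\<lambda>r. \<alpha> r * w ^ r - \<alpha> r * (Q * w) ^ r) = h"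
      by (rule ext) (simp add: h_def power_mult_distrib algebra_simps)
    ultimately have h1: "h sums (g w - g (Q * w))" by simp
    have "(\<lambda>r. w * (u * (\<alpha> r * w ^ r) - c * (\<alpha> r * (Q * w) ^ r))) sums (w * (u * g w - c * g (Q * w)))"
      by (intro sums_mult sums_diff S w w')
    moreover have "w * (u * (\<alpha> r * w ^ r) - c * (\<alpha> r * (Q * w) ^ r)) = h (Suc r)" for r
      unfolding h_def \<alpha>Suc by (simp add: power_mult_distrib algebra_simps)
    ultimately have "(\<lambda>r. h (Suc r)) sums (w * (u * g w - c * g (Q * w)))" by simp
    then have "h sums (w * (u * g w - c * g (Q * w)) + h 0)" by (simp add: sums_Suc_iff)
    then have "h sums (w * (u * g w - c * g (Q * w)))" by (simp add: h_def)
    from sums_unique2[OF h1 this] show ?thesis by (simp add: algebra_simps)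
  qed
  define G where "G n = g (Q ^ n * z)" for n
  have nQn: "norm (Q ^ n * z) \<le> norm z" for n
    using q by (simp add: norm_mult norm_power normQ mult_left_le_one_le power_le_one)
  have iter: "g z * qpoch (u * z) Q n = G n * qpoch (c * z) Q n" for n
  proof (induction n)
    case 0 then show ?case by (simp add: G_def)
  next
    case (Suc n)
    have "g z * qpoch (u * z) Q (Suc n) = G n * qpoch (c * z) Q n * (1 - u * (Q ^ n * z))"
      using Suc by (simp add: qpoch_Suc algebra_simps)
    also have "\<dots> = qpoch (c * z) Q n * (G n * (1 - u * (Q ^ n * z)))" by simp
    also have "G n * (1 - u * (Q ^ n * z)) = G (Suc n) * (1 - c * (Q ^ n * z))"
      unfolding G_def using FE[OF nQn[of n]] by (simp add: mult.assoc)
    finally show ?case by (simp add: qpoch_Suc algebra_simps)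
  qed
  have G0: "G \<longlonglongrightarrow> 1"
  proof (cases "z = 0")
    case True
    have "g 0 = 1" unfolding g_def by (subst powser_zero) (simp add: \<alpha>_def)
    then have "G = (\<lambda>n. 1)" by (intro ext) (simp add: G_def True)
    then show ?thesis by simp
  next
    case False
    have Qz: "(\<lambda>n. Q ^ n * z) \<longlonglongrightarrow> 0 * z"
      using q by (intro tendsto_intros LIMSEQ_power_zero) (auto simp: normQ)
    have "isCont g 0" unfolding g_def
      by (rule isCont_powser[OF sm]) (use False in auto)
    from isCont_tendsto_compose[OF this Qz[simplified]]
    have "(\<lambda>n. g (Q ^ n * z)) \<longlonglongrightarrow> g 0" .
    moreover    have "g 0 = 1" unfolding g_def by (subst powser_zero) (simp add: \<alpha>_def)
    ultimately show ?thesis by (simp add: G_def[abs_def])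
  qed
  have L1: "(\<lambda>n. g z * qpoch (u * z) Q n) \<longlonglongrightarrow> g z * qpoch_inf (u * z) Q"
    unfolding Q_def by (intro tendsto_intros qpoch_inf_lim q)
  have L2: "(\<lambda>n. G n * qpoch (c * z) Q n) \<longlonglongrightarrow> 1 * qpoch_inf (c * z) Q"
    unfolding Q_def by (intro tendsto_intros qpoch_inf_lim q G0[unfolded Q_def])
  have eq: "g z * qpoch_inf (u * z) Q = qpoch_inf (c * z) Q"
    using LIMSEQ_unique[OF L1 L2[folded iter]] by simp
  have nz: "qpoch_inf (u * z) Q \<noteq> 0" unfolding Q_def
  proof (rule qpoch_inf_nz[OF q])
    fix k
    have "norm (u * z) * q ^ k \<le> norm (u * z) * 1"
      using q by (intro mult_left_mono power_le_one) auto
    then have "norm (u * z * of_real q ^ k) \<le> norm (u * z)"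
      using q by (simp add: norm_mult norm_power)
    then show "u * z * of_real q ^ k \<noteq> 1" using uz by auto
  qed
  have "g z = qpoch_inf (c * z) Q / qpoch_inf (u * z) Q" using eq nz by (simp add: field_simps)
  with S[OF order_refl] show ?thesis by (simp add: \<alpha>_def Q_def)
qed


lemma qbin_has_sum:
  fixes q :: real and u c z :: complex
  assumes q: "0 < q" "q < 1" and uz: "norm (u * z) < 1"
  shows "((\<lambda>r. (\<Prod>i<r. u - c * of_real q ^ i) / qpoch (of_real q) (of_real q) r * z ^ r)
           has_sum (qpoch_inf (c * z) (of_real q) / qpoch_inf (u * z) (of_real q))) UNIV"
proof (rule norm_summable_imp_has_sum[OF _ qbin[OF q uz]])
  have sA: "summable (Astar u c z q)" using Astar_summable[OF q, of u z c] uz by (simp add: norm_mult)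
  show "summable (\<lambda>r. norm ((\<Prod>i<r. u - c * of_real q ^ i) / qpoch (of_real q) (of_real q) r * z ^ r))"
    by (rule summable_comparison_test[OF _ sA]) (use norm_term_le_Astar[OF q order_refl order_refl] in auto)
qed

lemma has_sum_prod_nonneg:
  fixes f :: "'a \<Rightarrow> real" and g :: "'b \<Rightarrow> real"
  assumes "(f has_sum F) UNIV" "(g has_sum G) UNIV" "\<And>x. f x \<ge> 0" "\<And>y. g y \<ge> 0"
  shows "((\<lambda>(x, y). f x * g y) has_sum (F * G)) UNIV"
proof -
  have sec: "((\<lambda>y. f x * g y) has_sum (f x * G)) UNIV" for x
    using has_sum_cmult_right[OF assms(2)] .
  have out: "((\<lambda>x. f x * G) has_sum (F * G)) UNIV"
    using has_sum_cmult_left[OF assms(1)] .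
  have "(\<lambda>(x, y). f x * g y) summable_on Sigma UNIV (\<lambda>_. UNIV)"
    by (rule summable_on_SigmaI[where g = "\<lambda>x. f x * G"])
       (use sec out assms(3,4) in \<open>auto intro: has_sum_imp_summable\<close>)
  then have "((\<lambda>(x, y). f x * g y) has_sum (F * G)) (Sigma UNIV (\<lambda>_. UNIV))"
    by (intro has_sum_SigmaI[where g = "\<lambda>x. f x * G"]) (use sec out in auto)
  then show ?thesis by simp
qed

lemma has_sum_prod_complex:
  fixes f g :: "nat \<Rightarrow> complex" and F1 G1 :: "nat \<Rightarrow> real"
  assumes "(f has_sum F) UNIV" "(g has_sum G) UNIV"
    and "\<And>x. norm (f x) \<le> F1 x" "\<And>y. norm (g y) \<le> G1 y" "summable F1" "summable G1"
  shows "((\<lambda>(x, y). f x * g y) has_sum (F * G)) UNIV"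
proof -
  have F1n: "F1 x \<ge> 0" for x using assms(3)[of x] norm_ge_zero order_trans by blast
  have G1n: "G1 x \<ge> 0" for x using assms(4)[of x] norm_ge_zero order_trans by blast
  have "((\<lambda>(x, y). F1 x * G1 y) has_sum (suminf F1 * suminf G1)) UNIV"
    by (intro has_sum_prod_nonneg sums_nonneg_imp_has_sum summable_sums assms F1n G1n)
  then have "(\<lambda>(x, y). F1 x * G1 y) summable_on UNIV" by (rule has_sum_imp_summable)
  then have "(\<lambda>p. norm ((\<lambda>(x, y). f x * g y) p)) summable_on UNIV"
    by (rule Infinite_Sum.abs_summable_on_comparison_test'[of "\<lambda>(x, y). F1 x * G1 y"])
       (auto simp: norm_mult intro!: mult_mono assms F1n G1n)
  then have sm: "(\<lambda>(x, y). f x * g y) summable_on Sigma UNIV (\<lambda>_. UNIV)"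
    by (simp add: summable_on_iff_abs_summable_on_complex)
  have "((\<lambda>(x, y). f x * g y) has_sum (F * G)) (Sigma UNIV (\<lambda>_. UNIV))"
    by (rule has_sum_SigmaI[where g = "\<lambda>x. f x * G", OF _ _ sm])
       (use has_sum_cmult_right[OF assms(2)] has_sum_cmult_left[OF assms(1)] in auto)
  then show ?thesis by simp
qed

definition Bstar :: "real \<Rightarrow> real \<Rightarrow> nat \<Rightarrow> real" where
  "Bstar q K k = q ^ (k choose 2) * K ^ k / (\<Prod>j<k. 1 - q ^ Suc j)"

lemma choose2_Suc: "Suc k choose 2 = (k choose 2) + k"
  by (simp add: numeral_2_eq_2)

lemma Bstar_summable:
  assumes q: "0 < q" "q < 1" and K: "K \<ge> 0"
  shows "summable (Bstar q K)"
proof -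
  have pos: "0 < (\<Prod>j<k. 1 - q ^ Suc j)" for k using qpoch_QQ_norm(2)[OF q] .
  have nn: "0 \<le> Bstar q K k" for k unfolding Bstar_def using pos[of k] q K by simp
  have suc: "Bstar q K (Suc k) = Bstar q K k * (q ^ k * K / (1 - q ^ Suc k))" for k
    by (simp add: Bstar_def choose2_Suc power_add field_simps)
  have qr: "(\<lambda>r. q ^ r) \<longlonglongrightarrow> 0" using q by (intro LIMSEQ_power_zero) auto
  have "(\<lambda>r. q ^ r * K / (1 - q * q ^ r)) \<longlonglongrightarrow> 0 * K / (1 - q * 0)"
    by (intro tendsto_intros qr) (use q in auto)
  then have lim: "(\<lambda>r. q ^ r * K / (1 - q ^ Suc r)) \<longlonglongrightarrow> 0" by simp
  from order_tendstoD(2)[OF lim, of "1/2"] obtain N where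
    N: "\<And>r. r \<ge> N \<Longrightarrow> q ^ r * K / (1 - q ^ Suc r) < 1/2"
    by (auto simp: eventually_sequentially)
  show ?thesis
  proof (rule summable_ratio_test[of "1/2" N])
    fix r assume "N \<le> r"
    have "norm (Bstar q K (Suc r)) = Bstar q K (Suc r)" using nn[of "Suc r"] by simp
    also have "\<dots> = Bstar q K r * (q ^ r * K / (1 - q ^ Suc r))" by (rule suc)
    also have "\<dots> \<le> Bstar q K r * (1/2)"
      using N[OF \<open>N \<le> r\<close>] nn[of r] by (intro mult_left_mono) auto
    finally show "norm (Bstar q K (Suc r)) \<le> 1/2 * norm (Bstar q K r)"
      using nn[of r] by (simp add: mult.commute)
  qed auto
qed

lemma norm_Bk_le:
  fixes q :: real and u v a b :: complex
  assumes q: "0 < q" "q < 1"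
  shows "norm ((-1) ^ k * of_real q ^ (k choose 2) * (\<Prod>i<k. (u - a * of_real q ^ i) * (v - b * of_real q ^ i))
           / qpoch (of_real q) (of_real q) k) \<le> Bstar q ((norm u + norm a) * (norm v + norm b)) k"
proof -
  have fac: "norm ((u - a * of_real q ^ i) * (v - b * of_real q ^ i)) \<le> (norm u + norm a) * (norm v + norm b)" for i
  proof -
    have qi: "q ^ i \<le> 1" using q by (intro power_le_one) auto
    have 1: "norm (u - a * of_real q ^ i) \<le> norm u + norm a"
    proof -
      have "norm (u - a * of_real q ^ i) \<le> norm u + norm (a * of_real q ^ i)" by (rule norm_triangle_ineq4)
      also have "norm (a * of_real q ^ i) = norm a * q ^ i" using q by (simp add: norm_mult norm_power)
      also have "\<dots> \<le> norm a" using qi by (simp add: mult_left_le)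
      finally show ?thesis by simp
    qed
    have 2: "norm (v - b * of_real q ^ i) \<le> norm v + norm b"
    proof -
      have "norm (v - b * of_real q ^ i) \<le> norm v + norm (b * of_real q ^ i)" by (rule norm_triangle_ineq4)
      also have "norm (b * of_real q ^ i) = norm b * q ^ i" using q by (simp add: norm_mult norm_power)
      also have "\<dots> \<le> norm b" using qi by (simp add: mult_left_le)
      finally show ?thesis by simp
    qed
    show ?thesis unfolding norm_mult by (intro mult_mono 1 2) auto
  qed
  have "norm (\<Prod>i<k. (u - a * of_real q ^ i) * (v - b * of_real q ^ i))
        \<le> (\<Prod>i<k. norm ((u - a * of_real q ^ i) * (v - b * of_real q ^ i)))" by (rule norm_prod_le)
  also have "\<dots> \<le> (\<Prod>i<k. (norm u + norm a) * (norm v + norm b))"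
    by (intro prod_mono) (use fac in auto)
  finally have P: "norm (\<Prod>i<k. (u - a * of_real q ^ i) * (v - b * of_real q ^ i)) \<le> ((norm u + norm a) * (norm v + norm b)) ^ k"
    by simp
  show ?thesis
    unfolding Bstar_def
    using P q qpoch_QQ_norm(2)[OF q, of k]
    by (simp add: norm_mult norm_divide norm_power qpoch_QQ_norm(1)[OF q] divide_right_mono mult_left_mono)
qed


lemma prod_split_shift:
  fixes a u Q :: complex
  shows "(\<Prod>i<k + r. u - a * Q ^ i) = (\<Prod>i<k. u - a * Q ^ i) * (\<Prod>i<r. u - (a * Q ^ k) * Q ^ i)"
  by (induction r) (auto simp: power_add mult_ac)

lemma term_identity:
  fixes Q a b u v z1 z2 :: complex
  assumes nz: "\<And>j. qpoch Q Q j \<noteq> 0"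
  shows "qbinom Q (k + r) k * qbinom Q (k + s) k * (-1) ^ k * Q ^ (k choose 2) * qpoch Q Q k
           * z1 ^ (k + r - k) * z2 ^ (k + s - k)
         * (\<Prod>i<k + r. u - a * Q ^ i) * (\<Prod>i<k + s. v - b * Q ^ i)
         / (qpoch Q Q (k + r) * qpoch Q Q (k + s))
       = (-1) ^ k * Q ^ (k choose 2) * (\<Prod>i<k. (u - a * Q ^ i) * (v - b * Q ^ i)) / qpoch Q Q k
         * ((\<Prod>i<r. u - (a * Q ^ k) * Q ^ i) / qpoch Q Q r * z1 ^ r
            * ((\<Prod>i<s. v - (b * Q ^ k) * Q ^ i) / qpoch Q Q s * z2 ^ s))"
  unfolding prod_split_shift[where k=k and r=r and u=u and a=a and Q=Q] prod_split_shift[where k=k and r=s and u=v and a=b and Q=Q] prod.distrib qbinom_def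
  using nz[of k] nz[of r] nz[of s] nz[of "k+r"] nz[of "k+s"]
  by (simp add: field_simps)


theorem theorem3p4:
  fixes q :: real and a b u v z1 z2 :: complex
  assumes "0 < q" "q < 1"
    and "norm (u * z1) < 1" "norm (v * z2) < 1"
    and "\<And>k::nat. a * z1 * of_real q ^ k \<noteq> 1"
    and "\<And>k::nat. b * z2 * of_real q ^ k \<noteq> 1"
  shows "((\<lambda>(m, n). H2D m n z1 z2 (of_real q)
            * (\<Prod>i<m. u - a * of_real q ^ i) * (\<Prod>i<n. v - b * of_real q ^ i)
            / (qpoch (of_real q) (of_real q) m * qpoch (of_real q) (of_real q) n))
         has_sum
           (qpoch_inf (a * z1) (of_real q) * qpoch_inf (b * z2) (of_real q)
            / (qpoch_inf (u * z1) (of_real q) * qpoch_inf (v * z2) (of_real q))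
            * (\<Sum>k. (\<Prod>i<k. (u - a * of_real q ^ i) * (v - b * of_real q ^ i))
                 / (qpoch (of_real q) (of_real q) k * qpoch (a * z1) (of_real q) k
                    * qpoch (b * z2) (of_real q) k)
                 * (-1) ^ k * of_real q ^ (k choose 2))))
         (UNIV :: (nat \<times> nat) set)"
proof -
  note q = assms(1,2)
  define Q where "Q = (of_real q :: complex)"
  define Bk where "Bk k = (-1) ^ k * Q ^ (k choose 2) * (\<Prod>i<k. (u - a * Q ^ i) * (v - b * Q ^ i)) / qpoch Q Q k" for k
  define \<alpha> where "\<alpha> k r = (\<Prod>i<r. u - (a * Q ^ k) * Q ^ i) / qpoch Q Q r * z1 ^ r" for k r
  define \<beta> where "\<beta> k s = (\<Prod>i<s. v - (b * Q ^ k) * Q ^ i) / qpoch Q Q s * z2 ^ s" for k s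
  define t where "t p = (case p of (k, r, s) \<Rightarrow> Bk k * (\<alpha> k r * \<beta> k s))" for p
  define Ga where "Ga k = qpoch_inf ((a * Q ^ k) * z1) Q / qpoch_inf (u * z1) Q" for k
  define Gb where "Gb k = qpoch_inf ((b * Q ^ k) * z2) Q / qpoch_inf (v * z2) Q" for k
  define K where "K = (norm u + norm a) * (norm v + norm b)"
  define M where "M p = (case p of (k, r, s) \<Rightarrow> Bstar q K k * (Astar u a z1 q r * Astar v b z2 q s))" for p
  have nQk: "norm (c * Q ^ k) \<le> norm c" for c k
    using q by (simp add: Q_def norm_mult norm_power mult_left_le power_le_one)
  have uz1: "norm u * norm z1 < 1" and vz2: "norm v * norm z2 < 1" using assms(3,4) by (simp_all add: norm_mult)
  have sAa: "summable (Astar u a z1 q)" by (rule Astar_summable[OF q uz1])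
  have sAb: "summable (Astar v b z2 q)" by (rule Astar_summable[OF q vz2])
  have sB: "summable (Bstar q K)" by (rule Bstar_summable[OF q]) (simp add: K_def)
  have Aan: "\<And>r. 0 \<le> Astar u a z1 q r" and Abn: "\<And>r. 0 \<le> Astar v b z2 q r"
    by (rule Astar_nonneg[OF q])+
  have Bn: "0 \<le> Bstar q K k" for k
    using qpoch_QQ_norm(2)[OF q, of k] q by (simp add: Bstar_def K_def)
  have ha: "(\<alpha> k has_sum Ga k) UNIV" for k
    using qbin_has_sum[OF q assms(3), of "a * Q ^ k"] unfolding \<alpha>_def Ga_def Q_def by simp
  have hb: "(\<beta> k has_sum Gb k) UNIV" for k
    using qbin_has_sum[OF q assms(4), of "b * Q ^ k"] unfolding \<beta>_def Gb_def Q_def by simp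
  have ba: "norm (\<alpha> k r) \<le> Astar u a z1 q r" for k r
    unfolding \<alpha>_def Q_def by (rule norm_term_le_Astar[OF q nQk[unfolded Q_def] order_refl])
  have bb: "norm (\<beta> k r) \<le> Astar v b z2 q r" for k r
    unfolding \<beta>_def Q_def by (rule norm_term_le_Astar[OF q nQk[unfolded Q_def] order_refl])
  have bB: "norm (Bk k) \<le> Bstar q K k" for k
    unfolding Bk_def Q_def K_def by (rule norm_Bk_le[OF q])
  have hM: "(M has_sum (suminf (Bstar q K) * (suminf (Astar u a z1 q) * suminf (Astar v b z2 q)))) UNIV"
  proof -
    have "((\<lambda>(r, s). Astar u a z1 q r * Astar v b z2 q s) has_sum (suminf (Astar u a z1 q) * suminf (Astar v b z2 q))) UNIV"
      by (intro has_sum_prod_nonneg sums_nonneg_imp_has_sum summable_sums sAa sAb Aan Abn)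
    then have "((\<lambda>(k, p). Bstar q K k * (\<lambda>(r, s). Astar u a z1 q r * Astar v b z2 q s) p) has_sum
        (suminf (Bstar q K) * (suminf (Astar u a z1 q) * suminf (Astar v b z2 q)))) UNIV"
      by (intro has_sum_prod_nonneg sums_nonneg_imp_has_sum summable_sums sB Bn)
         (auto intro: mult_nonneg_nonneg Aan Abn sAa sAb)
    moreover have "(\<lambda>(k, p). Bstar q K k * (\<lambda>(r, s). Astar u a z1 q r * Astar v b z2 q s) p) = M"
      by (auto simp: M_def fun_eq_iff)
    ultimately show ?thesis by simp
  qed
  have "(\<lambda>p. norm (t p)) summable_on UNIV"
  proof (rule Infinite_Sum.abs_summable_on_comparison_test'[OF has_sum_imp_summable[OF hM]])
    fix p :: "nat \<times> nat \<times> nat"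
    obtain k r s where p: "p = (k, r, s)" by (cases p) auto
    have "norm (t p) = norm (Bk k) * (norm (\<alpha> k r) * norm (\<beta> k s))" by (simp add: t_def p norm_mult)
    also have "\<dots> \<le> Bstar q K k * (Astar u a z1 q r * Astar v b z2 q s)"
      by (intro mult_mono ba bb bB mult_nonneg_nonneg Aan Abn norm_ge_zero) (use Bn in auto)
    finally show "norm (t p) \<le> M p" by (simp add: M_def p)
  qed
  then have tsum: "t summable_on UNIV" by (simp add: summable_on_iff_abs_summable_on_complex)
  define S where "S = infsum t UNIV"
  have hS: "(t has_sum S) UNIV" unfolding S_def using tsum by (rule has_sum_infsum)
  have sec1: "((\<lambda>p. t (k, p)) has_sum (Bk k * (Ga k * Gb k))) UNIV" for k
  proof -
    have "((\<lambda>(r, s). \<alpha> k r * \<beta> k s) has_sum (Ga k * Gb k)) UNIV"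
      by (rule has_sum_prod_complex[OF ha hb ba bb sAa sAb])
    from has_sum_cmult_right[OF this, of "Bk k"]
    show ?thesis by (simp add: t_def case_prod_unfold)
  qed
  have H1: "((\<lambda>k. Bk k * (Ga k * Gb k)) has_sum S) UNIV"
  proof (rule has_sum_Sigma')
    show "(t has_sum S) (Sigma UNIV (\<lambda>_. UNIV))" using hS by simp
  qed (use sec1 in auto)
  define T where "T x = (case x of ((m, n), k) \<Rightarrow> t (k, m - k, n - k))" for x
  have "(t has_sum S) UNIV = (T has_sum S) (Sigma UNIV (\<lambda>(m, n). {..min m n}))"
    by (rule has_sum_reindex_bij_witness[where j = "\<lambda>(k, r, s). ((k + r, k + s), k)"
          and i = "\<lambda>((m, n), k). (k, m - k, n - k)"]) (auto simp: T_def)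
  with hS have hT: "(T has_sum S) (Sigma UNIV (\<lambda>(m, n). {..min m n}))" by simp
  have H2: "((\<lambda>(m, n). \<Sum>k\<le>min m n. t (k, m - k, n - k)) has_sum S) UNIV"
    by (rule has_sum_Sigma'[OF hT]) (auto simp: T_def intro: has_sum_finite)
  have qnz: "qpoch Q Q j \<noteq> 0" for j unfolding Q_def by (rule qpoch_QQ_nz[OF q])
  have eqmn: "H2D m n z1 z2 Q * (\<Prod>i<m. u - a * Q ^ i) * (\<Prod>i<n. v - b * Q ^ i)
            / (qpoch Q Q m * qpoch Q Q n) = (\<Sum>k\<le>min m n. t (k, m - k, n - k))" for m n
    unfolding H2D_def sum_distrib_right sum_divide_distrib
  proof (rule sum.cong[OF refl])
    fix k assume "k \<in> {..min m n}"
    then obtain r s where m: "m = k + r" and n: "n = k + s"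
      by (metis atMost_iff le_Suc_ex min.bounded_iff)
    show "qbinom Q m k * qbinom Q n k * (- 1) ^ k * Q ^ (k choose 2) * qpoch Q Q k * z1 ^ (m - k) * z2 ^ (n - k) *
          (\<Prod>i<m. u - a * Q ^ i) * (\<Prod>i<n. v - b * Q ^ i) / (qpoch Q Q m * qpoch Q Q n) =
          t (k, m - k, n - k)"
      unfolding m n using term_identity[OF qnz, of k r s z1 z2 u a v b]
      by (simp add: t_def Bk_def \<alpha>_def \<beta>_def)
  qed
  have LHS: "((\<lambda>(m, n). H2D m n z1 z2 Q * (\<Prod>i<m. u - a * Q ^ i) * (\<Prod>i<n. v - b * Q ^ i)
            / (qpoch Q Q m * qpoch Q Q n)) has_sum S) UNIV"
    using H2 by (simp add: eqmn)
  define C where "C = qpoch_inf (a * z1) Q * qpoch_inf (b * z2) Q / (qpoch_inf (u * z1) Q * qpoch_inf (v * z2) Q)"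
  define x where "x k = (\<Prod>i<k. (u - a * Q ^ i) * (v - b * Q ^ i))
                 / (qpoch Q Q k * qpoch (a * z1) Q k * qpoch (b * z2) Q k) * (-1) ^ k * Q ^ (k choose 2)" for k
  have pa: "qpoch (a * z1) Q k \<noteq> 0" for k
    unfolding qpoch_def Q_def using assms(5) by (auto simp: mult_ac)
  have pb: "qpoch (b * z2) Q k \<noteq> 0" for k
    unfolding qpoch_def Q_def using assms(6) by (auto simp: mult_ac)
  have spa: "qpoch_inf (a * z1) Q = qpoch_inf ((a * Q ^ k) * z1) Q * qpoch (a * z1) Q k" for k
    using qpoch_inf_split[OF q, of "a * z1" k] unfolding Q_def by (simp add: mult_ac)
  have spb: "qpoch_inf (b * z2) Q = qpoch_inf ((b * Q ^ k) * z2) Q * qpoch (b * z2) Q k" for k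
    using qpoch_inf_split[OF q, of "b * z2" k] unfolding Q_def by (simp add: mult_ac)
  have termeq: "Bk k * (Ga k * Gb k) = C * x k" for k
    unfolding C_def x_def Bk_def Ga_def Gb_def spa[of k] spb[of k]
    using pa[of k] pb[of k] qnz[of k] by (simp add: field_simps)
  have HC: "((\<lambda>k. C * x k) has_sum S) UNIV" using H1 by (simp add: termeq)
  have Seq: "S = C * suminf x"
  proof (cases "C = 0")
    case True
    then have "((\<lambda>k. C * x k) has_sum 0) UNIV" by simp
    from has_sum_unique[OF HC this] True show ?thesis by simp
  next
    case False
    from has_sum_cmult_right[OF HC, of "1 / C"] False
    have "(x has_sum (S / C)) UNIV" by simp
    then have "x sums (S / C)" by (rule has_sum_imp_sums)
    then have "suminf x = S / C" by (rule sums_unique[symmetric])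
    with False show ?thesis by simp
  qed
  show ?thesis using LHS unfolding Seq C_def x_def Q_def .
qed

end
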